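(* For $x,\theta>0$ let $d_{\rm IS}(x,\theta)=\frac{x}{\theta}-\log\frac{x}{\theta}-1$. Let $g:[0,\infty)\to[0,\infty)$ be measurable with $0<\int_0^\infty \frac1t g(d_{\rm IS}(t,1))\,dt<\infty$, and for $\theta>0$ let $X$ have density $p(x\mid\theta)=\frac{1}{C}\frac{1}{x}g(d_{\rm IS}(x,\theta))$ on $(0,\infty)$, where $C=\int_0^\infty \frac1x g(d_{\rm IS}(x,\theta))\,dx$. Then: (i) $C=\int_0^\infty \frac1t g(d_{\rm IS}(t,1))\,dt$, in particular $C$ does not depend on $\theta$; (ii) $\mathbb{E}[X]<\infty$ if and only if $g\in L^1(\mathbb{R}_+)$, and in that case $\mathbb{E}[X]=\theta$ and $C=\int_0^\infty g(d_{\rm IS}(x,1))\,dx$.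
   Context: $d_{\rm IS}$ is the Itakura–Saito distance (the Bregman divergence generated by $\phi(x)=-\log x$); the density $p(x\mid\theta)$ is called the IS distribution with generator $g$. *)

theory Defs
  imports "HOL-Analysis.Analysis"
begin

definition d_IS :: "real \<Rightarrow> real \<Rightarrow> real" where
  "d_IS x \<theta> = x / \<theta> - ln (x / \<theta>) - 1"

definition IS_C :: "(real \<Rightarrow> real) \<Rightarrow> real \<Rightarrow> ennreal" where
  "IS_C g \<theta> = (\<integral>\<^sup>+ x \<in> {0<..}. ennreal ((1 / x) * g (d_IS x \<theta>)) \<partial>lborel)"

definition IS_density :: "(real \<Rightarrow> real) \<Rightarrow> real \<Rightarrow> real \<Rightarrow> real" where
  "IS_density g \<theta> x =
     (if 0 < x then (1 / enn2real (IS_C g \<theta>)) * (1 / x) * g (d_IS x \<theta>) else 0)"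

definition IS_mean :: "(real \<Rightarrow> real) \<Rightarrow> real \<Rightarrow> ennreal" where
  "IS_mean g \<theta> = (\<integral>\<^sup>+ x \<in> {0<..}. ennreal (x * IS_density g \<theta> x) \<partial>lborel)"

end

theory Submission imports Defs begin
definition phi :: "real \<Rightarrow> real" where "phi t = t - ln t - 1"

lemma phi_deriv: "0 < t \<Longrightarrow> (phi has_field_derivative (1 - 1/t)) (at t)"
  unfolding phi_def
  by (auto intro!: derivative_eq_intros simp: field_simps)

lemma phi_cont: "0 < a \<Longrightarrow> continuous_on {a..b} phi"
  unfolding phi_def by (auto intro!: continuous_intros)

lemma phi_1[simp]: "phi 1 = 0" by (simp add: phi_def)

lemma phi_mono_gt1: assumes "1 \<le> a" "a < b" shows "phi a < phi b"
proof (rule DERIV_pos_imp_increasing_open[OF assms(2)])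
  fix x assume "a < x" "x < b"
  then show "\<exists>y. DERIV phi x :> y \<and> 0 < y"
    using assms phi_deriv[of x] by (intro exI[of _ "1 - 1/x"]) (auto simp: field_simps)
qed (use assms in \<open>auto intro!: phi_cont\<close>)

lemma phi_mono_lt1: assumes "0 < a" "a < b" "b \<le> 1" shows "phi a > phi b"
proof (rule DERIV_neg_imp_decreasing_open[OF assms(2)])
  fix x assume "a < x" "x < b"
  then show "\<exists>y. DERIV phi x :> y \<and> y < 0"
    using assms phi_deriv[of x] by (intro exI[of _ "1 - 1/x"]) (auto simp: field_simps)
qed (use assms in \<open>auto intro!: phi_cont\<close>)

lemma phi_nonneg: "0 < t \<Longrightarrow> 0 \<le> phi t"
  using ln_le_minus_one[of t] by (simp add: phi_def)

lemma phi_img1: "phi ` {1<..} = {0<..}"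
proof
  show "phi ` {1<..} \<subseteq> {0<..}" using phi_mono_gt1[of 1] by auto
  show "{0<..} \<subseteq> phi ` {1<..}"
  proof
    fix u :: real assume u: "u \<in> {0<..}"
    have "ln (2*u+2) = ln 2 + ln (1 + u)" using u ln_mult[of 2 "1+u"] by (simp add: algebra_simps)
    also have "\<dots> \<le> ln 2 + u" using ln_add_one_self_le_self[of u] u by simp
    finally have "u \<le> phi (2*u+2)" using ln_2_less_1 by (simp add: phi_def)
    then obtain x where x: "1 \<le> x" "x \<le> 2*u+2" "phi x = u"
      using IVT'[of phi 1 u "2*u+2"] u phi_cont[of 1 "2*u+2"] by auto
    with u have "x \<noteq> 1" by auto
    with x show "u \<in> phi ` {1<..}" by force
  qed
qed

lemma phi_img2: "phi ` {0<..<1} = {0<..}"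
proof
  show "phi ` {0<..<1} \<subseteq> {0<..}" using phi_mono_lt1[of _ 1] by auto
  show "{0<..} \<subseteq> phi ` {0<..<1}"
  proof
    fix u :: real assume u: "u \<in> {0<..}"
    have "phi (exp (-(u+1))) = exp (-(u+1)) + u" by (simp add: phi_def)
    then have le: "u \<le> phi (exp (-(u+1)))" by simp
    have e1: "exp (-(u+1)) \<le> 1" using u by simp
    then obtain x where x: "exp (-(u+1)) \<le> x" "x \<le> 1" "phi x = u"
      using IVT2'[of phi 1 u "exp (-(u+1))"] u le phi_cont[of "exp (-(u+1))" 1] by auto
    with u have "x \<noteq> 1" by auto
    moreover have "0 < x" using x(1) by (meson exp_gt_zero less_le_trans)
    ultimately show "u \<in> phi ` {0<..<1}" using x by force
  qed
qed

lemma phi_inj1: "inj_on phi {1<..}"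
proof (rule linorder_inj_onI)
  fix x y :: real assume "x < y" "x \<in> {1<..}" "y \<in> {1<..}"
  then show "phi x \<noteq> phi y" using phi_mono_gt1[of x y] by auto
qed auto

lemma phi_inj2: "inj_on phi {0<..<1}"
proof (rule linorder_inj_onI)
  fix x y :: real assume "x < y" "x \<in> {0<..<1}" "y \<in> {0<..<1}"
  then show "phi x \<noteq> phi y" using phi_mono_lt1[of x y] by auto
qed auto

lemma subst_nn:
  fixes f \<phi> \<phi>' :: "real \<Rightarrow> real" and S :: "real set"
  assumes S: "S \<in> sets lebesgue" and T: "\<phi> ` S \<in> sets lebesgue"
    and fm: "f \<in> borel_measurable lebesgue" and fnn: "\<And>x. 0 \<le> f x"
    and Am: "(\<lambda>x. \<bar>\<phi>' x\<bar> * f (\<phi> x)) \<in> borel_measurable lebesgue"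
    and der: "\<And>x. x \<in> S \<Longrightarrow> (\<phi> has_field_derivative \<phi>' x) (at x within S)"
    and inj: "inj_on \<phi> S"
  shows "(\<integral>\<^sup>+x. ennreal (indicator (\<phi> ` S) x * f x) \<partial>lebesgue)
       = (\<integral>\<^sup>+x. ennreal (indicator S x * (\<bar>\<phi>' x\<bar> * f (\<phi> x))) \<partial>lebesgue)"
proof -
  let ?A = "\<lambda>x. \<bar>\<phi>' x\<bar> * f (\<phi> x)"
  have iff: "f absolutely_integrable_on \<phi> ` S \<longleftrightarrow> ?A absolutely_integrable_on S"
    by (rule absolutely_integrable_change_of_variables_1'[OF S der inj])
  have m1: "(\<lambda>x. indicator (\<phi> ` S) x * f x) \<in> borel_measurable lebesgue"
    using T fm by measurable
  have m2: "(\<lambda>x. indicator S x * ?A x) \<in> borel_measurable lebesgue"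
    using S Am by measurable
  show ?thesis
  proof (cases "f absolutely_integrable_on \<phi> ` S")
    case True
    with iff have A: "?A absolutely_integrable_on S" by simp
    have eq: "integral S ?A = integral (\<phi> ` S) f"
      using has_absolute_integral_change_of_variables_1'[OF S der inj, of f "integral (\<phi> ` S) f"] True
      by simp
    have "(\<integral>\<^sup>+x. ennreal (indicator (\<phi> ` S) x * f x) \<partial>lebesgue) = ennreal (set_lebesgue_integral lebesgue (\<phi> ` S) f)"
      unfolding set_lebesgue_integral_def
      using True unfolding set_integrable_def
      by (subst nn_integral_eq_integral) (auto simp: fnn)
    also have "\<dots> = ennreal (integral (\<phi> ` S) f)"
      using set_lebesgue_integral_eq_integral(2)[OF True] by simp
    also have "\<dots> = ennreal (set_lebesgue_integral lebesgue S ?A)"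
      using set_lebesgue_integral_eq_integral(2)[OF A] eq by simp
    also have "\<dots> = (\<integral>\<^sup>+x. ennreal (indicator S x * ?A x) \<partial>lebesgue)"
      unfolding set_lebesgue_integral_def
      using A unfolding set_integrable_def
      by (subst nn_integral_eq_integral) (auto simp: fnn)
    finally show ?thesis .
  next
    case False
    with iff have A: "\<not> ?A absolutely_integrable_on S" by simp
    have "(\<integral>\<^sup>+x. ennreal (indicator (\<phi> ` S) x * f x) \<partial>lebesgue) = \<infinity>"
      using False m1 unfolding set_integrable_def
      by (intro nn_integral_nonneg_infinite) (auto simp: fnn)
    moreover have "(\<integral>\<^sup>+x. ennreal (indicator S x * ?A x) \<partial>lebesgue) = \<infinity>"
      using A m2 unfolding set_integrable_def
      by (intro nn_integral_nonneg_infinite) (auto simp: fnn)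
    ultimately show ?thesis by simp
  qed
qed

lemma two_ennreal: "0 \<le> a \<Longrightarrow> 0 \<le> b \<Longrightarrow>
  2 * ennreal a + 2 * ennreal b = ennreal (2 * a + 2 * (b::real))"
  by (simp add: ennreal_plus ennreal_mult)

lemma scale_pos:
  fixes F :: "real \<Rightarrow> ennreal" and \<theta> :: real
  assumes [measurable]: "F \<in> borel_measurable borel" and th: "0 < \<theta>"
  shows "(\<integral>\<^sup>+x. F x * indicator {0<..} x \<partial>lborel) = ennreal \<theta> * (\<integral>\<^sup>+t. F (\<theta> * t) * indicator {0<..} t \<partial>lborel)"
proof -
  have "(\<integral>\<^sup>+x. F x * indicator {0<..} x \<partial>lborel) = ennreal \<bar>\<theta>\<bar> * (\<integral>\<^sup>+x. F (0 + \<theta> * x) * indicator {0<..} (0 + \<theta> * x) \<partial>lborel)"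
    using th by (intro nn_integral_real_affine) auto
  also have "(\<lambda>x. F (0 + \<theta> * x) * indicator {0<..} (0 + \<theta> * x)) = (\<lambda>x. F (\<theta> * x) * indicator {0<..} x)"
    using th by (auto simp: indicator_def zero_less_mult_iff)
  finally show ?thesis using th by simp
qed

lemma subst_lborel:
  fixes f \<phi> \<phi>' :: "real \<Rightarrow> real" and S :: "real set"
  assumes S: "S \<in> sets borel" and T: "\<phi> ` S \<in> sets borel"
    and fm: "f \<in> borel_measurable borel" and fnn: "\<And>x. 0 \<le> f x"
    and Am: "(\<lambda>x. \<bar>\<phi>' x\<bar> * f (\<phi> x)) \<in> borel_measurable borel"
    and der: "\<And>x. x \<in> S \<Longrightarrow> (\<phi> has_field_derivative \<phi>' x) (at x)"
    and inj: "inj_on \<phi> S"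
  shows "(\<integral>\<^sup>+x. ennreal (indicator (\<phi> ` S) x * f x) \<partial>lborel)
       = (\<integral>\<^sup>+x. ennreal (indicator S x * (\<bar>\<phi>' x\<bar> * f (\<phi> x))) \<partial>lborel)"
proof -
  have "(\<integral>\<^sup>+x. ennreal (indicator (\<phi> ` S) x * f x) \<partial>lebesgue)
       = (\<integral>\<^sup>+x. ennreal (indicator S x * (\<bar>\<phi>' x\<bar> * f (\<phi> x))) \<partial>lebesgue)"
    by (rule subst_nn) (use assms in \<open>auto intro: measurable_completion sets_completionI_sets has_field_derivative_at_within\<close>)
  then show ?thesis by (simp add: nn_integral_completion)
qed

theorem mainTheorem4:
  fixes g :: "real \<Rightarrow> real" and \<theta> :: real
  assumes g_meas: "g \<in> borel_measurable (restrict_space borel {0..})"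
    and g_nonneg: "\<And>u. 0 \<le> u \<Longrightarrow> 0 \<le> g u"
    and C_pos: "0 < (\<integral>\<^sup>+ t \<in> {0<..}. ennreal ((1 / t) * g (d_IS t 1)) \<partial>lborel)"
    and C_fin: "(\<integral>\<^sup>+ t \<in> {0<..}. ennreal ((1 / t) * g (d_IS t 1)) \<partial>lborel) < \<infinity>"
    and theta_pos: "0 < \<theta>"
  shows "IS_C g \<theta> = (\<integral>\<^sup>+ t \<in> {0<..}. ennreal ((1 / t) * g (d_IS t 1)) \<partial>lborel)
     \<and> (IS_mean g \<theta> < \<infinity> \<longleftrightarrow> set_integrable lborel {0..} g)
     \<and> (set_integrable lborel {0..} g \<longrightarrow>
          IS_mean g \<theta> = ennreal \<theta> \<and>
          IS_C g \<theta> = (\<integral>\<^sup>+ x \<in> {0<..}. ennreal (g (d_IS x 1)) \<partial>lborel))"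
proof -
  define G where "G u = (if 0 \<le> u then g u else 0)" for u
  have Gm[measurable]: "G \<in> borel_measurable borel"
  proof -
    have "(\<lambda>x. indicator {0..} x *\<^sub>R g x) \<in> borel_measurable borel"
      using g_meas by (subst (asm) borel_measurable_restrict_space_iff) auto
    also have "(\<lambda>x. indicator {0..} x *\<^sub>R g x) = G"
      by (auto simp: G_def indicator_def)
    finally show ?thesis .
  qed
  have Gnn: "0 \<le> G u" for u by (auto simp: G_def g_nonneg)
  have phim[measurable]: "phi \<in> borel_measurable borel" unfolding phi_def by measurable
  have dphi: "0 < x \<Longrightarrow> 0 < t \<Longrightarrow> g (d_IS x t) = G (phi (x / t))" for x t
    using phi_nonneg[of "x/t"] by (simp add: G_def d_IS_def phi_def)
  define C1 where "C1 = (\<integral>\<^sup>+ t \<in> {0<..}. ennreal ((1 / t) * g (d_IS t 1)) \<partial>lborel)"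
  define NC where "NC = (\<integral>\<^sup>+t. ennreal (indicator {0<..} t * (1/t * G (phi t))) \<partial>lborel)"
  define NM where "NM = (\<integral>\<^sup>+t. ennreal (indicator {0<..} t * G (phi t)) \<partial>lborel)"
  define L where "L = (\<integral>\<^sup>+u. ennreal (indicator {0<..} u * G u) \<partial>lborel)"
  define L1 where "L1 = (\<integral>\<^sup>+t. ennreal (indicator {1<..} t * (\<bar>1 - 1/t\<bar> * G (phi t))) \<partial>lborel)"
  define L2 where "L2 = (\<integral>\<^sup>+t. ennreal (indicator {0<..<1} t * (\<bar>1 - 1/t\<bar> * G (phi t))) \<partial>lborel)"
  have C1_NC: "C1 = NC" unfolding C1_def NC_def
    by (intro nn_integral_cong) (auto simp: indicator_def dphi)
  have M1_NM: "(\<integral>\<^sup>+ x \<in> {0<..}. ennreal (g (d_IS x 1)) \<partial>lborel) = NM" unfolding NM_def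
    by (intro nn_integral_cong) (auto simp: indicator_def dphi)
  have L_L1: "L = L1" unfolding L_def L1_def
    using subst_lborel[of "{1<..}" phi G "\<lambda>t. 1 - 1/t"] phi_img1 phi_inj1 phi_deriv Gnn
    by auto
  have L_L2: "L = L2" unfolding L_def L2_def
    using subst_lborel[of "{0<..<1}" phi G "\<lambda>t. 1 - 1/t"] phi_img2 phi_inj2 phi_deriv Gnn
    by auto
  have IS_C_NC: "IS_C g \<theta> = NC"
  proof -
    have "IS_C g \<theta> = (\<integral>\<^sup>+x. ennreal ((1/x) * G (phi (x/\<theta>))) * indicator {0<..} x \<partial>lborel)"
      unfolding IS_C_def using theta_pos
      by (intro nn_integral_cong) (auto simp: indicator_def dphi)
    also have "\<dots> = ennreal \<theta> * (\<integral>\<^sup>+t. ennreal ((1/(\<theta>*t)) * G (phi (\<theta>*t/\<theta>))) * indicator {0<..} t \<partial>lborel)"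
      by (rule scale_pos[OF _ theta_pos]) measurable
    also have "\<dots> = (\<integral>\<^sup>+t. ennreal \<theta> * (ennreal ((1/(\<theta>*t)) * G (phi (\<theta>*t/\<theta>))) * indicator {0<..} t) \<partial>lborel)"
      by (rule nn_integral_cmult[symmetric]) measurable
    also have "\<dots> = NC" unfolding NC_def using theta_pos
      by (intro nn_integral_cong) (auto simp: indicator_def ennreal_mult[symmetric] Gnn)
    finally show ?thesis .
  qed
  define Cr where "Cr = enn2real (IS_C g \<theta>)"
  have C1_eq: "C1 = ennreal Cr" and Cr_pos: "0 < Cr"
    using C_pos C_fin IS_C_NC C1_NC unfolding Cr_def C1_def[symmetric]
    by (auto simp: less_top enn2real_positive_iff)
  have mean_eq: "IS_mean g \<theta> = ennreal (1/Cr) * (ennreal \<theta> * NM)"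
  proof -
    have "IS_mean g \<theta> = (\<integral>\<^sup>+x. ennreal (1/Cr) * (ennreal (G (phi (x/\<theta>))) * indicator {0<..} x) \<partial>lborel)"
      unfolding IS_mean_def IS_density_def Cr_def[symmetric] using theta_pos Cr_pos
      by (intro nn_integral_cong) (auto simp: indicator_def dphi ennreal_mult[symmetric] Gnn)
    also have "\<dots> = ennreal (1/Cr) * (\<integral>\<^sup>+x. ennreal (G (phi (x/\<theta>))) * indicator {0<..} x \<partial>lborel)"
      by (rule nn_integral_cmult) measurable
    also have "(\<integral>\<^sup>+x. ennreal (G (phi (x/\<theta>))) * indicator {0<..} x \<partial>lborel)
        = ennreal \<theta> * (\<integral>\<^sup>+t. ennreal (G (phi (\<theta>*t/\<theta>))) * indicator {0<..} t \<partial>lborel)"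
      by (rule scale_pos[OF _ theta_pos]) measurable
    also have "(\<integral>\<^sup>+t. ennreal (G (phi (\<theta>*t/\<theta>))) * indicator {0<..} t \<partial>lborel) = NM"
      unfolding NM_def using theta_pos
      by (intro nn_integral_cong) (auto simp: indicator_def)
    finally show ?thesis .
  qed
  have mean_iff: "IS_mean g \<theta> < \<infinity> \<longleftrightarrow> NM < \<infinity>"
    using Cr_pos theta_pos unfolding mean_eq
    by (auto simp: ennreal_mult_less_top top_unique)
  have int_iff: "set_integrable lborel {0..} g \<longleftrightarrow> L < \<infinity>"
  proof -
    have m: "(\<lambda>x. indicator {0..} x *\<^sub>R g x) \<in> borel_measurable lborel"
      using g_meas by (subst (asm) borel_measurable_restrict_space_iff) auto
    have "(\<integral>\<^sup>+x. ennreal (norm (indicator {0..} x *\<^sub>R g x)) \<partial>lborel) = L"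
      unfolding L_def
      by (intro nn_integral_cong_AE, use AE_lborel_singleton[of 0] in eventually_elim)
         (auto simp: indicator_def G_def g_nonneg)
    then show ?thesis unfolding set_integrable_def using m
      by (simp add: integrable_iff_bounded)
  qed
  have NM_le: "NM \<le> 2 * NC + 2 * L1"
  proof -
    have "NM \<le> (\<integral>\<^sup>+t. 2 * ennreal (indicator {0<..} t * (1/t * G (phi t)))
                     + 2 * ennreal (indicator {1<..} t * (\<bar>1 - 1/t\<bar> * G (phi t))) \<partial>lborel)"
      unfolding NM_def
    proof (intro nn_integral_mono)
      fix t :: real
      have "indicator {0<..} t * G (phi t) \<le> 2 * (indicator {0<..} t * (1/t * G (phi t)))
                     + 2 * (indicator {1<..} t * (\<bar>1 - 1/t\<bar> * G (phi t)))"
      proof (cases "0 < t")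
        case True
        show ?thesis
        proof (cases "t \<le> 2")
          case True2: True
          have nn: "0 \<le> 2 * (indicator {1<..} t * (\<bar>1 - 1/t\<bar> * G (phi t)))" using Gnn by simp
          have "1 \<le> 2 * (1/t)" using True True2 by (simp add: field_simps)
          from mult_right_mono[OF this Gnn[of "phi t"]] True True2
          have "indicator {0<..} t * G (phi t) \<le> 2 * (indicator {0<..} t * (1/t * G (phi t)))"
            by (auto simp: indicator_def)
          then show ?thesis using nn by linarith
        next
          case False
          have "1 \<le> 2 * \<bar>1 - 1/t\<bar>" using False by (simp add: field_simps)
          from mult_right_mono[OF this Gnn[of "phi t"]] False True
          have "G (phi t) \<le> 2 * (\<bar>1 - 1/t\<bar> * G (phi t))" by (simp add: algebra_simps)
          moreover have "0 \<le> 2 * (1/t * G (phi t))" using True Gnn by simp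
          ultimately show ?thesis using True False by (auto simp: indicator_def)
        qed
      qed (auto simp: indicator_def)
      then show "ennreal (indicator {0<..} t * G (phi t)) \<le> 2 * ennreal (indicator {0<..} t * (1/t * G (phi t)))
                     + 2 * ennreal (indicator {1<..} t * (\<bar>1 - 1/t\<bar> * G (phi t)))"
      proof -
        have a0: "0 \<le> indicator {0<..} t * (1/t * G (phi t))" using Gnn by (simp add: indicator_def)
        have b0: "0 \<le> indicator {1<..} t * (\<bar>1 - 1/t\<bar> * G (phi t))" using Gnn by simp
        have "2 * ennreal (indicator {0<..} t * (1/t * G (phi t)))
                     + 2 * ennreal (indicator {1<..} t * (\<bar>1 - 1/t\<bar> * G (phi t)))
             = ennreal (2 * (indicator {0<..} t * (1/t * G (phi t)))
                     + 2 * (indicator {1<..} t * (\<bar>1 - 1/t\<bar> * G (phi t))))"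
          using two_ennreal[OF a0 b0] .
        with \<open>indicator {0<..} t * G (phi t) \<le> _\<close> show ?thesis
          by (simp add: ennreal_leI)
      qed
    qed
    also have "\<dots> = 2 * NC + 2 * L1" unfolding NC_def L1_def
      apply (subst nn_integral_add, measurable)
      apply (subst nn_integral_cmult, measurable)
      apply (subst nn_integral_cmult, measurable)
      done
    finally show ?thesis .
  qed
  have NM_eq: "L < \<infinity> \<Longrightarrow> NM = NC"
  proof -
    assume Lfin: "L < \<infinity>"
    have "NM + L2 = (\<integral>\<^sup>+t. ennreal (indicator {0<..} t * G (phi t)) + ennreal (indicator {0<..<1} t * (\<bar>1 - 1/t\<bar> * G (phi t))) \<partial>lborel)"
      unfolding NM_def L2_def by (subst nn_integral_add) auto
    also have "\<dots> = (\<integral>\<^sup>+t. ennreal (indicator {0<..} t * (1/t * G (phi t))) + ennreal (indicator {1<..} t * (\<bar>1 - 1/t\<bar> * G (phi t))) \<partial>lborel)"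
    proof (intro nn_integral_cong)
      fix t :: real
      have "indicator {0<..} t * G (phi t) + indicator {0<..<1} t * (\<bar>1 - 1/t\<bar> * G (phi t))
          = indicator {0<..} t * (1/t * G (phi t)) + indicator {1<..} t * (\<bar>1 - 1/t\<bar> * G (phi t))"
        by (cases "0 < t"; cases "t < 1"; cases "t = 1")
           (auto simp: indicator_def abs_if field_simps)
      then show "ennreal (indicator {0<..} t * G (phi t)) + ennreal (indicator {0<..<1} t * (\<bar>1 - 1/t\<bar> * G (phi t)))
          = ennreal (indicator {0<..} t * (1/t * G (phi t))) + ennreal (indicator {1<..} t * (\<bar>1 - 1/t\<bar> * G (phi t)))"
        by (subst (1 2) ennreal_plus[symmetric]) (auto simp: Gnn indicator_def)
    qed
    also have "\<dots> = NC + L1"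
      unfolding NC_def L1_def by (subst nn_integral_add) auto
    finally have "NM + L = NC + L" using L_L1 L_L2 by simp
    then have "L + NM = L + NC" by (simp add: add.commute)
    then show "NM = NC" using Lfin ennreal_add_left_cancel[of L NM NC] by auto
  qed
  show ?thesis
  proof (intro conjI impI)
    show "IS_C g \<theta> = (\<integral>\<^sup>+ t \<in> {0<..}. ennreal ((1 / t) * g (d_IS t 1)) \<partial>lborel)"
      using IS_C_NC C1_NC unfolding C1_def by simp
    show "IS_mean g \<theta> < \<infinity> \<longleftrightarrow> set_integrable lborel {0..} g"
    proof
      assume "IS_mean g \<theta> < \<infinity>"
      then have "NM < \<infinity>" using mean_iff by simp
      moreover have "L \<le> NM" unfolding L_L1 L1_def NM_def
        by (intro nn_integral_mono) (auto simp: indicator_def Gnn intro!: ennreal_leI mult_left_le_one_le)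
      ultimately show "set_integrable lborel {0..} g" using int_iff by simp
    next
      assume "set_integrable lborel {0..} g"
      then have "L < \<infinity>" using int_iff by simp
      then have "NM < \<infinity>" using NM_eq C_fin C1_NC C1_def by simp
      then show "IS_mean g \<theta> < \<infinity>" using mean_iff by simp
    qed
    assume "set_integrable lborel {0..} g"
    then have NM: "NM = NC" using int_iff NM_eq by simp
    show "IS_mean g \<theta> = ennreal \<theta>"
    proof -
      have "IS_mean g \<theta> = ennreal (1/Cr) * (ennreal \<theta> * ennreal Cr)"
        using mean_eq NM C1_NC C1_eq by simp
      also have "\<dots> = ennreal (1/Cr * (\<theta> * Cr))"
        using Cr_pos theta_pos by (simp add: ennreal_mult'[symmetric])
      also have "1/Cr * (\<theta> * Cr) = \<theta>" using Cr_pos by simp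
      finally show ?thesis .
    qed
    show "IS_C g \<theta> = (\<integral>\<^sup>+ x \<in> {0<..}. ennreal (g (d_IS x 1)) \<partial>lborel)"
      using M1_NM NM IS_C_NC by simp
  qed
qed
end
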